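(* Let $m\ge2$, $q\in(0,1)$, let $\psi$ be a completely monotone Archimedean copula generator and $Z$ a positive random variable with Laplace transform $\psi(t)=\mathbb E[e^{-tZ}]$ and cdf $F_Z$. Define $$\gamma_{min}=\int\min_{k\in\{1,\dots,m\}}\left\{\frac{\exp(-z\psi^{-1}(kq/m))}{kq/m}\right\}dF_Z(z),\qquad g(x\mid z)=\frac{\exp(-zx)}{\psi(x)},\qquad z^*=\frac{\log m}{\psi^{-1}(q/m)-\psi^{-1}(q)}.$$ Then $$\gamma_{min}=1-\int_0^{z^*}\bigl(g(\psi^{-1}(q/m)\mid z)-g(\psi^{-1}(q)\mid z)\bigr)dF_Z(z)=1-\mathbb E\bigl[(g(\psi^{-1}(q/m)\mid Z)-g(\psi^{-1}(q)\mid Z))\mathbf 1_{[0,z^*]}(Z)\bigr].$$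
   Context: Completely monotone generator: $\psi:[0,\infty)\to[0,1]$, $\psi(0)=1$, $\lim_{x\to\infty}\psi(x)=0$, $(-1)^d\psi^{(d)}\ge0$ for all $d\in\mathbb N$; $\psi^{-1}$ is its inverse. *)

theory Defs
  imports "HOL-Probability.Probability"
begin

definition cm_generator :: "(real \<Rightarrow> real) \<Rightarrow> bool" where
  "cm_generator \<psi> \<longleftrightarrow>
     \<psi> 0 = 1 \<and> (\<forall>x\<ge>0. \<psi> x \<in> {0..1}) \<and> continuous_on {0..} \<psi> \<and>
     (\<psi> \<longlongrightarrow> 0) at_top \<and>
     (\<forall>d x. x > 0 \<longrightarrow> ((deriv ^^ d) \<psi> has_real_derivative (deriv ^^ Suc d) \<psi> x) (at x)) \<and>
     (\<forall>d x. x > 0 \<longrightarrow> (-1) ^ d * (deriv ^^ d) \<psi> x \<ge> 0)"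

definition gen_inv :: "(real \<Rightarrow> real) \<Rightarrow> real \<Rightarrow> real" where
  "gen_inv \<psi> u = (THE t. 0 \<le> t \<and> \<psi> t = u)"

definition gcond :: "(real \<Rightarrow> real) \<Rightarrow> real \<Rightarrow> real \<Rightarrow> real" where
  "gcond \<psi> x z = exp (- z * x) / \<psi> x"

end

theory Submission
  imports Defs
begin

lemma exp_cvx: fixes l u v :: real shows "0 \<le> l \<Longrightarrow> l \<le> 1 \<Longrightarrow> exp (l * u + (1 - l) * v) \<le> l * exp u + (1 - l) * exp v"
  using convex_onD[OF exp_convex, of l v u] by (simp add: algebra_simps)

context
  fixes M :: "'a measure" and Z :: "'a \<Rightarrow> real" and \<psi> :: "real \<Rightarrow> real"
  assumes P: "prob_space M" and Zm[measurable]: "Z \<in> borel_measurable M"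
    and Zpos: "AE \<omega> in M. Z \<omega> > 0"
    and cm: "cm_generator \<psi>"
    and L: "\<And>t. t \<ge> 0 \<Longrightarrow> \<psi> t = (\<integral>\<omega>. exp (- t * Z \<omega>) \<partial>M)"
begin

lemma integ: "t \<ge> 0 \<Longrightarrow> integrable M (\<lambda>\<omega>. exp (- t * Z \<omega>))"
proof -
  interpret prob_space M by (rule P)
  assume t: "t \<ge> 0"
  show ?thesis
  proof (rule integrable_const_bound[where B=1])
    show "AE x in M. norm (exp (- t * Z x)) \<le> 1"
      using Zpos by eventually_elim (use t in \<open>auto simp: mult_nonneg_nonneg\<close>)
  qed measurable
qed

lemma strict: "0 \<le> s \<Longrightarrow> s < t \<Longrightarrow> \<psi> t < \<psi> s"
proof -
  interpret prob_space M by (rule P)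
  assume st: "0 \<le> s" "s < t"
  have "(\<integral>\<omega>. exp (- t * Z \<omega>) \<partial>M) < (\<integral>\<omega>. exp (- s * Z \<omega>) \<partial>M)"
  proof (rule integral_less_AE_space)
    show "AE x in M. exp (- t * Z x) < exp (- s * Z x)"
      using Zpos by eventually_elim (use st in auto)
  qed (use st integ emeasure_space_1 in auto)
  then show ?thesis using L st by simp
qed

lemma pos: "0 \<le> t \<Longrightarrow> 0 < \<psi> t"
proof -
  interpret prob_space M by (rule P)
  assume t: "0 \<le> t"
  have "(\<integral>\<omega>. 0 \<partial>M) < (\<integral>\<omega>. exp (- t * Z \<omega>) \<partial>M)"
    by (rule integral_less_AE_space) (use t integ emeasure_space_1 in auto)
  then show ?thesis using L t by simp
qed

lemma logconv:
  assumes a: "0 \<le> a" and b: "0 \<le> b" and l: "0 \<le> l" "l \<le> 1"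
  shows "ln (\<psi> (l * a + (1 - l) * b)) \<le> l * ln (\<psi> a) + (1 - l) * ln (\<psi> b)"
proof -
  interpret prob_space M by (rule P)
  define A where "A = \<psi> a"
  define B where "B = \<psi> b"
  define c where "c = l * ln A + (1 - l) * ln B"
  have A: "A > 0" using pos a A_def by auto
  have B: "B > 0" using pos b B_def by auto
  have t0: "0 \<le> l * a + (1 - l) * b" using a b l by auto
  have pw: "exp (- (l * a + (1 - l) * b) * z) \<le>
       exp c * (l * (exp (- a * z) / A) + (1 - l) * (exp (- b * z) / B))" for z
  proof -
    have "exp (- (l * a + (1 - l) * b) * z) = exp c * exp (l * (- a * z - ln A) + (1 - l) * (- b * z - ln B))"
      unfolding c_def mult_exp_exp by (rule arg_cong[where f=exp]) (simp add: algebra_simps)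
    also have "\<dots> \<le> exp c * (l * exp (- a * z - ln A) + (1 - l) * exp (- b * z - ln B))"
      using exp_cvx[OF l] by (intro mult_left_mono) auto
    also have "\<dots> = exp c * (l * (exp (- a * z) / A) + (1 - l) * (exp (- b * z) / B))"
      using A B by (simp add: exp_diff)
    finally show ?thesis .
  qed
  have "\<psi> (l * a + (1 - l) * b) \<le> (\<integral>\<omega>. exp c * (l * (exp (- a * Z \<omega>) / A) + (1 - l) * (exp (- b * Z \<omega>) / B)) \<partial>M)"
    unfolding L[OF t0]
  proof (rule integral_mono)
    show "integrable M (\<lambda>\<omega>. exp (- (l * a + (1 - l) * b) * Z \<omega>))" using integ[OF t0] .
  qed (use integ a b t0 pw in auto)
  also have "\<dots> = exp c * (l * ((\<integral>\<omega>. exp (- a * Z \<omega>) \<partial>M) / A) + (1 - l) * ((\<integral>\<omega>. exp (- b * Z \<omega>) \<partial>M) / B))"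
    using integ a b by simp
  also have "\<dots> = exp c"
    using A B L a b unfolding A_def B_def by simp
  finally have "\<psi> (l * a + (1 - l) * b) \<le> exp c" .
  then show ?thesis using pos[OF t0] unfolding c_def A_def B_def
    by (metis ln_exp ln_le_cancel_iff exp_gt_zero)
qed

lemma ginv: assumes "0 < u" "u \<le> 1"
  shows "0 \<le> gen_inv \<psi> u \<and> \<psi> (gen_inv \<psi> u) = u"
proof -
  have ex: "\<exists>t. 0 \<le> t \<and> \<psi> t = u"
  proof (cases "u = 1")
    case True then show ?thesis using cm unfolding cm_generator_def by auto
  next
    case False
    have lim: "(\<psi> \<longlongrightarrow> 0) at_top" and c: "continuous_on {0..} \<psi>" and p0: "\<psi> 0 = 1"
      using cm unfolding cm_generator_def by auto
    have "eventually (\<lambda>x. \<psi> x < u) at_top" using order_tendstoD(2)[OF lim] assms by auto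
    then obtain N where N: "\<And>x. x \<ge> N \<Longrightarrow> \<psi> x < u" by (auto simp: eventually_at_top_linorder)
    define T where "T = max N 0"
    have "\<psi> T \<le> u" using N[of T] by (auto simp: T_def)
    moreover have "u \<le> \<psi> 0" using assms p0 by auto
    moreover have "continuous_on {0..T} \<psi>" using c by (rule continuous_on_subset) auto
    ultimately obtain x where "0 \<le> x" "x \<le> T" "\<psi> x = u"
      using IVT2'[of \<psi> T u 0] by (auto simp: T_def)
    then show ?thesis by auto
  qed
  have uniq: "x = y" if "0 \<le> x" "\<psi> x = u" "0 \<le> y" "\<psi> y = u" for x y
    using strict[of x y] strict[of y x] that by (cases x y rule: linorder_cases) auto
  from ex obtain t where t: "0 \<le> t" "\<psi> t = u" by auto
  have "gen_inv \<psi> u = t" unfolding gen_inv_def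
    by (rule the_equality) (use t uniq in auto)
  with t show ?thesis by simp
qed

lemma ginv_mono: assumes "0 < u" "u < v" "v \<le> 1"
  shows "gen_inv \<psi> v < gen_inv \<psi> u"
proof (rule ccontr)
  assume "\<not> ?thesis"
  then have "gen_inv \<psi> u \<le> gen_inv \<psi> v" by simp
  moreover have "0 \<le> gen_inv \<psi> u \<and> \<psi> (gen_inv \<psi> u) = u" using ginv assms by auto
  moreover have "0 \<le> gen_inv \<psi> v \<and> \<psi> (gen_inv \<psi> v) = v" using ginv assms by auto
  ultimately show False using strict[of "gen_inv \<psi> u" "gen_inv \<psi> v"] assms
    by (cases "gen_inv \<psi> u = gen_inv \<psi> v") auto
qed

lemma pointwise:
  fixes m :: nat and q z :: real
  assumes m: "m \<ge> 2" and q: "0 < q" "q < 1"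
  shows "Min ((\<lambda>k. exp (- z * gen_inv \<psi> (real k * q / real m)) / (real k * q / real m)) ` {1..m})
     = (if z \<le> ln (real m) / (gen_inv \<psi> (q / real m) - gen_inv \<psi> q)
        then gcond \<psi> (gen_inv \<psi> q) z else gcond \<psi> (gen_inv \<psi> (q / real m)) z)"
proof -
  define x1 where "x1 = gen_inv \<psi> (q / real m)"
  define xm where "xm = gen_inv \<psi> q"
  define H where "H x = - z * x - ln (\<psi> x)" for x
  define G where "G k = exp (- z * gen_inv \<psi> (real k * q / real m)) / (real k * q / real m)" for k :: nat
  have mpos: "real m > 1" using m by simp
  have qm: "0 < q / real m" "q / real m < q" using q mpos by (auto simp: field_simps)
  have x1m: "xm < x1" unfolding x1_def xm_def using ginv_mono[of "q / real m" q] qm q by auto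
  have p1: "0 \<le> x1" "\<psi> x1 = q / real m" unfolding x1_def using ginv[of "q / real m"] qm q by auto
  have pm: "0 \<le> xm" "\<psi> xm = q" unfolding xm_def using ginv[of q] q by auto
  have gc: "gcond \<psi> x z = exp (H x)" if "0 \<le> x" for x
    unfolding gcond_def H_def using pos[OF that] by (simp add: exp_diff)
  have Gk: "G k = exp (H (gen_inv \<psi> (real k * q / real m))) \<and> H (gen_inv \<psi> (real k * q / real m)) \<ge> min (H x1) (H xm)"
    if k: "k \<in> {1..m}" for k
  proof -
    define u where "u = real k * q / real m"
    define xk where "xk = gen_inv \<psi> u"
    have u1: "q / real m \<le> u" "u \<le> q" using k q mpos unfolding u_def by (auto simp: field_simps)
    have u0: "0 < u" "u \<le> 1" using u1 qm q by auto
    have pk: "0 \<le> xk" "\<psi> xk = u" unfolding xk_def using ginv u0 by auto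
    have le1: "xk \<le> x1"
    proof (cases "u = q / real m")
      case True then show ?thesis unfolding xk_def x1_def by simp
    next
      case False then show ?thesis unfolding xk_def x1_def using ginv_mono[of "q / real m" u] u1 u0 qm by auto
    qed
    have le2: "xm \<le> xk"
    proof (cases "u = q")
      case True then show ?thesis unfolding xk_def xm_def by simp
    next
      case False then show ?thesis unfolding xk_def xm_def using ginv_mono[of u q] u1 u0 q by auto
    qed
    define l where "l = (xk - xm) / (x1 - xm)"
    have l: "0 \<le> l" "l \<le> 1" using le1 le2 x1m unfolding l_def by (auto simp: field_simps)
    have "l * (x1 - xm) = xk - xm" using x1m unfolding l_def by simp
    then have xk: "xk = l * x1 + (1 - l) * xm" by (simp add: algebra_simps)
    have lc: "ln (\<psi> xk) \<le> l * ln (\<psi> x1) + (1 - l) * ln (\<psi> xm)"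
      using logconv[OF p1(1) pm(1) l] unfolding xk[symmetric] .
    have zx: "z * xk = l * (z * x1) + (1 - l) * (z * xm)" unfolding xk by (simp add: algebra_simps)
    have "H xk \<ge> l * H x1 + (1 - l) * H xm"
      unfolding H_def using lc zx by (simp add: algebra_simps)
    moreover have "l * H x1 + (1 - l) * H xm \<ge> min (H x1) (H xm)"
    proof -
      have "l * H x1 \<ge> l * min (H x1) (H xm)" using l by (intro mult_left_mono) auto
      moreover have "(1 - l) * H xm \<ge> (1 - l) * min (H x1) (H xm)" using l by (intro mult_left_mono) auto
      ultimately show ?thesis by (simp add: algebra_simps)
    qed
    moreover have "G k = exp (H xk)" unfolding G_def H_def xk_def u_def[symmetric]
      using pk u0 xk_def by (simp add: exp_diff)
    ultimately show ?thesis unfolding xk_def u_def by simp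
  qed
  have G1: "G 1 = exp (H x1)" using Gk[of 1] m unfolding x1_def by simp
  have Gm: "G m = exp (H xm)" using Gk[of m] m unfolding xm_def by simp
  have diff: "H x1 - H xm = ln (real m) - z * (x1 - xm)"
    unfolding H_def using p1 pm q mpos by (simp add: ln_div algebra_simps)
  have zs: "z \<le> ln (real m) / (x1 - xm) \<longleftrightarrow> H xm \<le> H x1"
    using diff x1m by (simp add: pos_le_divide_eq algebra_simps) linarith
  have "Min (G ` {1..m}) = (if H xm \<le> H x1 then G m else G 1)"
  proof (rule Min_eqI)
    fix y assume "y \<in> G ` {1..m}"
    then obtain k where k: "k \<in> {1..m}" "y = G k" by auto
    then show "(if H xm \<le> H x1 then G m else G 1) \<le> y"
      using Gk[OF k(1)] G1 Gm by (auto simp: min_def split: if_splits)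
  next
    show "(if H xm \<le> H x1 then G m else G 1) \<in> G ` {1..m}" using m by auto
  qed auto
  then show ?thesis
    unfolding G_def[symmetric] x1_def[symmetric] xm_def[symmetric] zs
    using G1 Gm gc p1 pm by simp
qed

end


theorem lemma1:
  fixes M :: "'a measure" and Z :: "'a \<Rightarrow> real" and \<psi> :: "real \<Rightarrow> real"
    and m :: nat and q :: real
  assumes "prob_space M"
    and "Z \<in> borel_measurable M"
    and "AE \<omega> in M. Z \<omega> > 0"
    and "cm_generator \<psi>"
    and "\<And>t. t \<ge> 0 \<Longrightarrow> \<psi> t = (\<integral>\<omega>. exp (- t * Z \<omega>) \<partial>M)"
    and "m \<ge> 2" and "0 < q" and "q < 1"
  shows
    "(let zstar = ln (real m) / (gen_inv \<psi> (q / real m) - gen_inv \<psi> q);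
          \<gamma>min = (\<integral>z. Min ((\<lambda>k. exp (- z * gen_inv \<psi> (real k * q / real m)) / (real k * q / real m)) ` {1..m})
                    \<partial>(distr M borel Z))
      in \<gamma>min = 1 - (LINT z:{0..zstar}|distr M borel Z.
                        gcond \<psi> (gen_inv \<psi> (q / real m)) z - gcond \<psi> (gen_inv \<psi> q) z)
       \<and> \<gamma>min = 1 - (\<integral>\<omega>. (gcond \<psi> (gen_inv \<psi> (q / real m)) (Z \<omega>) - gcond \<psi> (gen_inv \<psi> q) (Z \<omega>))
                         * indicator {0..zstar} (Z \<omega>) \<partial>M))"
proof -
  interpret prob_space M by (rule assms(1))
  note Zm[measurable] = assms(2)
  define x1 where "x1 = gen_inv \<psi> (q / real m)"
  define xm where "xm = gen_inv \<psi> q"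
  define zs where "zs = ln (real m) / (x1 - xm)"
  define g1 where "g1 z = gcond \<psi> x1 z" for z
  define gm where "gm z = gcond \<psi> xm z" for z
  have mpos: "real m > 1" using assms(6) by simp
  have qm: "0 < q / real m" "q / real m \<le> 1" using assms(7,8) mpos by (auto simp: field_simps)
  have p1: "0 \<le> x1" "\<psi> x1 = q / real m" unfolding x1_def using ginv[OF assms(1-5) qm] by auto
  have pm: "0 \<le> xm" "\<psi> xm = q" unfolding xm_def using ginv[OF assms(1-5), of q] assms(7,8) by auto
  have g1m[measurable]: "g1 \<in> borel_measurable borel" unfolding g1_def gcond_def by measurable
  have gmm[measurable]: "gm \<in> borel_measurable borel" unfolding gm_def gcond_def by measurable
  have fq: "(\<lambda>z. Min ((\<lambda>k. exp (- z * gen_inv \<psi> (real k * q / real m)) / (real k * q / real m)) ` {1..m}))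
     = (\<lambda>z. if z \<le> zs then gm z else g1 z)"
    using pointwise[OF assms(1-5) assms(6-8)] unfolding zs_def gm_def g1_def x1_def xm_def by auto
  have i1: "integrable M (\<lambda>\<omega>. g1 (Z \<omega>))"
  proof -
    have "integrable M (\<lambda>\<omega>. exp (- x1 * Z \<omega>) / \<psi> x1)" using integ[OF assms(1-5) p1(1)] by auto
    then show ?thesis unfolding g1_def gcond_def by (simp add: mult.commute)
  qed
  have im: "integrable M (\<lambda>\<omega>. gm (Z \<omega>))"
  proof -
    have "integrable M (\<lambda>\<omega>. exp (- xm * Z \<omega>) / \<psi> xm)" using integ[OF assms(1-5) pm(1)] by auto
    then show ?thesis unfolding gm_def gcond_def by (simp add: mult.commute)
  qed
  have iD: "integrable M (\<lambda>\<omega>. (g1 (Z \<omega>) - gm (Z \<omega>)) * indicator {0..zs} (Z \<omega>))"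
    by (rule Bochner_Integration.integrable_bound[OF Bochner_Integration.integrable_diff[OF i1 im]]) (auto split: split_indicator)
  have int1: "(\<integral>\<omega>. g1 (Z \<omega>) \<partial>M) = 1"
  proof -
    have "(\<integral>\<omega>. g1 (Z \<omega>) \<partial>M) = (\<integral>\<omega>. exp (- x1 * Z \<omega>) \<partial>M) / \<psi> x1"
      unfolding g1_def gcond_def by (simp add: mult.commute)
    also have "\<dots> = 1" using assms(5)[OF p1(1)] p1 qm by simp
    finally show ?thesis .
  qed
  have "(\<integral>z. Min ((\<lambda>k. exp (- z * gen_inv \<psi> (real k * q / real m)) / (real k * q / real m)) ` {1..m}) \<partial>(distr M borel Z))
      = (\<integral>\<omega>. (if Z \<omega> \<le> zs then gm (Z \<omega>) else g1 (Z \<omega>)) \<partial>M)"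
    unfolding fq by (rule integral_distr) auto
  also have "\<dots> = (\<integral>\<omega>. g1 (Z \<omega>) - (g1 (Z \<omega>) - gm (Z \<omega>)) * indicator {0..zs} (Z \<omega>) \<partial>M)"
    by (rule integral_cong_AE) (use assms(3) in \<open>auto split: split_indicator\<close>)
  also have "\<dots> = 1 - (\<integral>\<omega>. (g1 (Z \<omega>) - gm (Z \<omega>)) * indicator {0..zs} (Z \<omega>) \<partial>M)"
    using Bochner_Integration.integral_diff[OF i1 iD] int1 by simp
  finally have A: "(\<integral>z. Min ((\<lambda>k. exp (- z * gen_inv \<psi> (real k * q / real m)) / (real k * q / real m)) ` {1..m}) \<partial>(distr M borel Z))
     = 1 - (\<integral>\<omega>. (g1 (Z \<omega>) - gm (Z \<omega>)) * indicator {0..zs} (Z \<omega>) \<partial>M)" .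
  have B: "(LINT z:{0..zs}|distr M borel Z. g1 z - gm z) = (\<integral>\<omega>. (g1 (Z \<omega>) - gm (Z \<omega>)) * indicator {0..zs} (Z \<omega>) \<partial>M)"
    unfolding set_lebesgue_integral_def
    by (subst integral_distr) (auto simp: mult.commute)
  show ?thesis using A B unfolding Let_def zs_def[symmetric] x1_def[symmetric] xm_def[symmetric]
    g1_def[symmetric] gm_def[symmetric] by simp
qed

end
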